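(* Let $G=(V,S,\sigma,w,\theta,\pi)$ be a restaking network with $\theta(s)>0$ and $\sum_{v'\in V}w(v',s)>0$ for all $s\in S$, and suppose the cost of a validator in an attack $\alpha$ is replaced by the all-or-nothing cost $c'_v(\alpha)=\sigma(v)$ if $\sum_{s\in S_\alpha}\alpha(v,s)>0$ and $c'_v(\alpha)=0$ otherwise (with total cost $C'(\alpha)=\sum_{v}c'_v(\alpha)$). If for every validator $v\in V$ $$\sum_{s\in S}\frac{w(v,s)}{\sum_{v'\in V}w(v',s)}\cdot\frac{\pi(s)}{\theta(s)}<\sigma(v),$$ then there is no attack $\alpha$ with $S_\alpha\neq\emptyset$ and $C'(\alpha)\le\Pi(\alpha)$; i.e., $G$ is secure under this cost model.
   Context: A restaking network is a tuple $G=(V,S,\sigma,w,\theta,\pi)$ with finite nonempty validator set $V$, finite service set $S$, stake $\sigma:V\to\mathbb{R}_{>0}$, allocation $w:V\times S\to\mathbb{R}_{\ge0}$ with $w(v,s)\le\sigma(v)$, thresholds $\theta:S\to[0,1]$ and prizes $\pi:S\to\mathbb{R}_{>0}$. An attack is $\alpha:V\times S\to\mathbb{R}_{\ge0}$ with $\alpha(v,s)\le w(v,s)$; its attacked services are $S_\alpha=\{s:\sum_v\alpha(v,s)\ge\theta(s)\sum_v w(v,s)\}$ and its prize is $\Pi(\alpha)=\sum_{s\in S_\alpha}\pi(s)$. *)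

theory Defs
  imports Complex_Main
begin

definition restaking_network ::
  "'v set \<Rightarrow> 's set \<Rightarrow> ('v \<Rightarrow> real) \<Rightarrow> ('v \<Rightarrow> 's \<Rightarrow> real) \<Rightarrow> ('s \<Rightarrow> real) \<Rightarrow> ('s \<Rightarrow> real) \<Rightarrow> bool" where
  "restaking_network V S \<sigma> w \<theta> \<pi> \<longleftrightarrow>
     finite V \<and> V \<noteq> {} \<and> finite S \<and>
     (\<forall>v\<in>V. \<sigma> v > 0) \<and>
     (\<forall>v\<in>V. \<forall>s\<in>S. 0 \<le> w v s \<and> w v s \<le> \<sigma> v) \<and>
     (\<forall>s\<in>S. 0 \<le> \<theta> s \<and> \<theta> s \<le> 1) \<and>
     (\<forall>s\<in>S. \<pi> s > 0)"

definition is_attack :: "'v set \<Rightarrow> 's set \<Rightarrow> ('v \<Rightarrow> 's \<Rightarrow> real) \<Rightarrow> ('v \<Rightarrow> 's \<Rightarrow> real) \<Rightarrow> bool" where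
  "is_attack V S w \<alpha> \<longleftrightarrow> (\<forall>v\<in>V. \<forall>s\<in>S. 0 \<le> \<alpha> v s \<and> \<alpha> v s \<le> w v s)"

definition attacked_services ::
  "'v set \<Rightarrow> 's set \<Rightarrow> ('v \<Rightarrow> 's \<Rightarrow> real) \<Rightarrow> ('s \<Rightarrow> real) \<Rightarrow> ('v \<Rightarrow> 's \<Rightarrow> real) \<Rightarrow> 's set" where
  "attacked_services V S w \<theta> \<alpha> = {s\<in>S. (\<Sum>v\<in>V. \<alpha> v s) \<ge> \<theta> s * (\<Sum>v\<in>V. w v s)}"

definition attack_prize ::
  "'v set \<Rightarrow> 's set \<Rightarrow> ('v \<Rightarrow> 's \<Rightarrow> real) \<Rightarrow> ('s \<Rightarrow> real) \<Rightarrow> ('s \<Rightarrow> real) \<Rightarrow> ('v \<Rightarrow> 's \<Rightarrow> real) \<Rightarrow> real" where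
  "attack_prize V S w \<theta> \<pi> \<alpha> = (\<Sum>s\<in>attacked_services V S w \<theta> \<alpha>. \<pi> s)"

definition aon_cost ::
  "'v set \<Rightarrow> 's set \<Rightarrow> ('v \<Rightarrow> real) \<Rightarrow> ('v \<Rightarrow> 's \<Rightarrow> real) \<Rightarrow> ('s \<Rightarrow> real) \<Rightarrow> ('v \<Rightarrow> 's \<Rightarrow> real) \<Rightarrow> 'v \<Rightarrow> real" where
  "aon_cost V S \<sigma> w \<theta> \<alpha> v =
     (if (\<Sum>s\<in>attacked_services V S w \<theta> \<alpha>. \<alpha> v s) > 0 then \<sigma> v else 0)"

definition aon_total_cost ::
  "'v set \<Rightarrow> 's set \<Rightarrow> ('v \<Rightarrow> real) \<Rightarrow> ('v \<Rightarrow> 's \<Rightarrow> real) \<Rightarrow> ('s \<Rightarrow> real) \<Rightarrow> ('v \<Rightarrow> 's \<Rightarrow> real) \<Rightarrow> real" where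
  "aon_total_cost V S \<sigma> w \<theta> \<alpha> = (\<Sum>v\<in>V. aon_cost V S \<sigma> w \<theta> \<alpha> v)"

end

theory Submission
  imports Defs
begin

theorem mainTheorem3:
  fixes V :: "'v set" and S :: "'s set" and \<sigma> :: "'v \<Rightarrow> real"
    and w :: "'v \<Rightarrow> 's \<Rightarrow> real" and \<theta> \<pi> :: "'s \<Rightarrow> real"
  assumes net: "restaking_network V S \<sigma> w \<theta> \<pi>"
    and theta_pos: "\<forall>s\<in>S. \<theta> s > 0"
    and wsum_pos: "\<forall>s\<in>S. (\<Sum>v'\<in>V. w v' s) > 0"
    and cond: "\<forall>v\<in>V. (\<Sum>s\<in>S. (w v s / (\<Sum>v'\<in>V. w v' s)) * (\<pi> s / \<theta> s)) < \<sigma> v"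
  shows "\<not> (\<exists>\<alpha>. is_attack V S w \<alpha> \<and> attacked_services V S w \<theta> \<alpha> \<noteq> {} \<and>
              aon_total_cost V S \<sigma> w \<theta> \<alpha> \<le> attack_prize V S w \<theta> \<pi> \<alpha>)"
proof
  assume "\<exists>\<alpha>. is_attack V S w \<alpha> \<and> attacked_services V S w \<theta> \<alpha> \<noteq> {} \<and>
              aon_total_cost V S \<sigma> w \<theta> \<alpha> \<le> attack_prize V S w \<theta> \<pi> \<alpha>"
  then obtain \<alpha> where att: "is_attack V S w \<alpha>" and ne: "attacked_services V S w \<theta> \<alpha> \<noteq> {}"
    and le: "aon_total_cost V S \<sigma> w \<theta> \<alpha> \<le> attack_prize V S w \<theta> \<pi> \<alpha>" by blast
  define A where "A = attacked_services V S w \<theta> \<alpha>"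
  define B where "B = {v\<in>V. (\<Sum>s\<in>A. \<alpha> v s) > 0}"
  define W where "W s = (\<Sum>v'\<in>V. w v' s)" for s
  define f where "f v s = (w v s / W s) * (\<pi> s / \<theta> s)" for v s
  have fV: "finite V" and fS: "finite S" and sig: "\<forall>v\<in>V. \<sigma> v > 0"
    and wnn: "\<forall>v\<in>V. \<forall>s\<in>S. 0 \<le> w v s" and pip: "\<forall>s\<in>S. \<pi> s > 0"
    using net unfolding restaking_network_def by auto
  have AS: "A \<subseteq> S" unfolding A_def attacked_services_def by auto
  have fA: "finite A" using AS fS finite_subset by blast
  have fB: "finite B" unfolding B_def using fV by auto
  have BV: "B \<subseteq> V" unfolding B_def by auto
  have ann: "\<And>v s. v \<in> V \<Longrightarrow> s \<in> S \<Longrightarrow> 0 \<le> \<alpha> v s \<and> \<alpha> v s \<le> w v s"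
    using att unfolding is_attack_def by auto
  have Ageq: "\<And>s. s \<in> A \<Longrightarrow> (\<Sum>v\<in>V. \<alpha> v s) \<ge> \<theta> s * W s"
    unfolding A_def attacked_services_def W_def by auto
  have zero: "\<And>v s. v \<in> V - B \<Longrightarrow> s \<in> A \<Longrightarrow> \<alpha> v s = 0"
  proof -
    fix v s assume v: "v \<in> V - B" and s: "s \<in> A"
    have nn: "\<forall>t\<in>A. 0 \<le> \<alpha> v t" using ann v AS by auto
    have "(\<Sum>t\<in>A. \<alpha> v t) \<le> 0" using v unfolding B_def by auto
    moreover have "(\<Sum>t\<in>A. \<alpha> v t) \<ge> 0" using nn by (simp add: sum_nonneg)
    ultimately have "(\<Sum>t\<in>A. \<alpha> v t) = 0" by linarith
    then show "\<alpha> v s = 0" using sum_nonneg_eq_0_iff[OF fA] nn s by blast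
  qed
  have sumB: "(\<Sum>v\<in>V. \<alpha> v s) = (\<Sum>v\<in>B. \<alpha> v s)" if s: "s \<in> A" for s
    using zero s by (intro sum.mono_neutral_right[OF fV BV]) auto
  have step1: "\<And>s. s \<in> A \<Longrightarrow> \<pi> s \<le> (\<Sum>v\<in>B. f v s)"
  proof -
    fix s assume s: "s \<in> A"
    have sS: "s \<in> S" using s AS by auto
    have tp: "\<theta> s > 0" using theta_pos sS by auto
    have Wp: "W s > 0" using wsum_pos sS unfolding W_def by auto
    have pp: "\<pi> s > 0" using pip sS by auto
    define c where "c = \<pi> s / (\<theta> s * W s)"
    have cp: "c \<ge> 0" unfolding c_def using tp Wp pp by auto
    have "\<pi> s = c * (\<theta> s * W s)" unfolding c_def using tp Wp by simp
    also have "\<dots> \<le> c * (\<Sum>v\<in>B. \<alpha> v s)"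
      using Ageq[OF s] sumB[OF s] cp by (simp add: mult_left_mono)
    also have "\<dots> = (\<Sum>v\<in>B. c * \<alpha> v s)" by (simp add: sum_distrib_left)
    also have "\<dots> \<le> (\<Sum>v\<in>B. c * w v s)"
      apply (rule sum_mono) using ann BV sS cp by (simp add: mult_left_mono subset_iff)
    also have "\<dots> = (\<Sum>v\<in>B. f v s)"
      unfolding f_def c_def by (intro sum.cong) (auto simp: field_simps)
    finally show "\<pi> s \<le> (\<Sum>v\<in>B. f v s)" .
  qed
  have fnn: "\<And>v s. v \<in> V \<Longrightarrow> s \<in> S \<Longrightarrow> 0 \<le> f v s"
  proof -
    fix v s assume v: "v \<in> V" and s: "s \<in> S"
    have "W s > 0" using wsum_pos s unfolding W_def by auto
    moreover have "\<theta> s > 0" "\<pi> s > 0" "w v s \<ge> 0" using theta_pos pip wnn v s by auto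
    ultimately show "0 \<le> f v s" unfolding f_def by auto
  qed
  obtain s0 where s0: "s0 \<in> A" using ne A_def by auto
  have "B \<noteq> {}"
  proof
    assume Be: "B = {}"
    have s0S: "s0 \<in> S" using s0 AS by auto
    have "\<theta> s0 * W s0 > 0" using theta_pos wsum_pos s0S unfolding W_def by auto
    moreover have "(\<Sum>v\<in>V. \<alpha> v s0) = 0" using sumB[OF s0] Be by simp
    ultimately show False using Ageq[OF s0] by linarith
  qed
  have "attack_prize V S w \<theta> \<pi> \<alpha> = (\<Sum>s\<in>A. \<pi> s)"
    unfolding attack_prize_def A_def by simp
  also have "\<dots> \<le> (\<Sum>s\<in>A. \<Sum>v\<in>B. f v s)" by (rule sum_mono) (rule step1)
  also have "\<dots> = (\<Sum>v\<in>B. \<Sum>s\<in>A. f v s)" by (rule sum.swap)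
  also have "\<dots> \<le> (\<Sum>v\<in>B. \<Sum>s\<in>S. f v s)"
    apply (rule sum_mono) apply (rule sum_mono2[OF fS AS])
    using fnn BV by auto
  also have "\<dots> < (\<Sum>v\<in>B. \<sigma> v)"
    apply (rule sum_strict_mono[OF fB \<open>B \<noteq> {}\<close>])
    using cond BV unfolding f_def W_def by auto
  also have "\<dots> = aon_total_cost V S \<sigma> w \<theta> \<alpha>"
  proof -
    have "aon_total_cost V S \<sigma> w \<theta> \<alpha> = (\<Sum>v\<in>V. if v \<in> B then \<sigma> v else 0)"
      unfolding aon_total_cost_def aon_cost_def B_def A_def by (intro sum.cong) auto
    also have "\<dots> = (\<Sum>v\<in>B. \<sigma> v)"
      using fV BV by (simp add: sum.If_cases Int_absorb1 inf.absorb2)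
    finally show ?thesis by simp
  qed
  finally show False using le by linarith
qed

end
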